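(* There is a duality (contravariant self-equivalence) on the category of finite-dimensional right $B'$-comodules which on string comodules is given by interchanging the letters $a_i$ and $b_i^{-1}$ for all $i$ in the string. In particular it interchanges $M(t,s)$ and $M'(t,s)$, and interchanges $N(t,s)$ and $N'(t,s)$.
   Context: $k$ is a field. $Q$ is the quiver with vertices $0,1,2,\dots$ and arrows $a_i:i\to i+1$, $b_i:i+1\to i$ ($i\ge0$); $kQ$ is its path coalgebra with vertices as group-likes $g_i$ and arrows $\alpha:h\to g$ skew-primitive ($\Delta\alpha=g\otimes\alpha+\alpha\otimes h$). $B'\subseteq kQ$ is the subcoalgebra spanned by the $g_i,a_i,b_i$ (the string coalgebra associated with the basic coalgebra of a nontrivial block of $k_\zeta[SL(2)]$ at an odd root of unity in characteristic zero). A finite-dimensional representation $V=\bigoplus_iV_i$ of $Q$ in which every composite of two arrows is zero is a right $B'$-comodule via $\rho(v)=v\otimes g_i+\sum_{\alpha:\,s(\alpha)=i}\alpha(v)\otimes\alpha$ for $v\in V_i$. For $0\le s<t$ and a word $w=w_{t-1}\cdots w_s$ with each $w_j\in\{a_j,b_j^{-1}\}$ and consecutive letters alternating in type, the string comodule $\mathrm{St}(w)$ has basis $v_s,\dots,v_t$ with $v_j\in V_j$, $a_j(v_j)=v_{j+1}$ if $w_j=a_j$, $b_j(v_{j+1})=v_j$ if $w_j=b_j^{-1}$, other arrow actions on basis vectors zero. $M(t,s)=\mathrm{St}(a_{t-1}b_{t-2}^{-1}\cdots a_{s+1}b_s^{-1})$, $M'(t,s)=\mathrm{St}(b_{t-1}^{-1}a_{t-2}\cdots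 b_{s+1}^{-1}a_s)$ ($t-s$ even), $N(t,s)=\mathrm{St}(a_{t-1}b_{t-2}^{-1}\cdots b_{s+1}^{-1}a_s)$, $N'(t,s)=\mathrm{St}(b_{t-1}^{-1}a_{t-2}\cdots a_{s+1}b_s^{-1})$ ($t-s$ odd), and $M(i,i)=M'(i,i)=kg_i$. *)

theory Defs
  imports "Jordan_Normal_Form.Matrix"
begin

text \<open>Basis of the coalgebra B': group-likes g_i, arrows a_i : i -> i+1 and b_i : i+1 -> i.\<close>
datatype coel = G nat | A nat | Bb nat

text \<open>Comultiplication on the basis, as a list of pairs (d,c) meaning d tensor c.
  For an arrow alpha : h -> g we have Delta alpha = g tensor alpha + alpha tensor h.\<close>
fun Delta :: "coel \<Rightarrow> (coel \<times> coel) list" where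
  "Delta (G i) = [(G i, G i)]"
| "Delta (A i) = [(G (Suc i), A i), (A i, G i)]"
| "Delta (Bb i) = [(G i, Bb i), (Bb i, G (Suc i))]"

fun eps :: "coel \<Rightarrow> 'k::field" where
  "eps (G i) = 1"
| "eps (A i) = 0"
| "eps (Bb i) = 0"

text \<open>A finite-dimensional right B'-comodule: V = k^n (column vectors) and
  rho(v) = sum_c (rho c) v tensor c, with rho c an n x n matrix.\<close>
type_synonym 'k comod = "nat \<times> (coel \<Rightarrow> 'k mat)"

definition is_comod :: "'k::field comod \<Rightarrow> bool" where
  "is_comod X \<longleftrightarrow> (let n = fst X; rho = snd X in
     (\<forall>c. rho c \<in> carrier_mat n n)
   \<and> finite {c. rho c \<noteq> 0\<^sub>m n n}
   \<and> (\<forall>d c. rho d * rho c =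
          mat n n (\<lambda>(i,j). \<Sum>e\<in>{e. (d,c) \<in> set (Delta e)}.
                    of_nat (count_list (Delta e) (d,c)) * (rho e $$ (i,j))))
   \<and> 1\<^sub>m n = mat n n (\<lambda>(i,j). \<Sum>e\<in>{c. rho c \<noteq> 0\<^sub>m n n}. eps e * (rho e $$ (i,j))))"

definition comod_hom :: "'k::field comod \<Rightarrow> 'k comod \<Rightarrow> 'k mat \<Rightarrow> bool" where
  "comod_hom X Y f \<longleftrightarrow> is_comod X \<and> is_comod Y \<and> f \<in> carrier_mat (fst Y) (fst X)
     \<and> (\<forall>c. f * snd X c = snd Y c * f)"

definition comod_iso :: "'k::field comod \<Rightarrow> 'k comod \<Rightarrow> bool" where
  "comod_iso X Y \<longleftrightarrow> (\<exists>f g. comod_hom X Y f \<and> comod_hom Y X g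
     \<and> g * f = 1\<^sub>m (fst X) \<and> f * g = 1\<^sub>m (fst Y))"

definition is_duality ::
  "('k::field comod \<Rightarrow> 'k comod) \<Rightarrow> ('k comod \<Rightarrow> 'k comod \<Rightarrow> 'k mat \<Rightarrow> 'k mat) \<Rightarrow> bool" where
  "is_duality D Dm \<longleftrightarrow>
     (\<forall>X. is_comod X \<longrightarrow> is_comod (D X))
   \<and> (\<forall>X Y f. comod_hom X Y f \<longrightarrow> comod_hom (D Y) (D X) (Dm X Y f))
   \<and> (\<forall>X Y Z f g. comod_hom X Y f \<longrightarrow> comod_hom Y Z g \<longrightarrow>
         Dm X Z (g * f) = Dm X Y f * Dm Y Z g)
   \<and> (\<forall>X. is_comod X \<longrightarrow> Dm X X (1\<^sub>m (fst X)) = 1\<^sub>m (fst (D X)))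
   \<and> (\<forall>X Y f g. comod_hom X Y f \<longrightarrow> comod_hom X Y g \<longrightarrow> Dm X Y (f + g) = Dm X Y f + Dm X Y g)
   \<and> (\<forall>X Y f a. comod_hom X Y f \<longrightarrow> Dm X Y (a \<cdot>\<^sub>m f) = a \<cdot>\<^sub>m Dm X Y f)
   \<and> (\<forall>X Y. is_comod X \<longrightarrow> is_comod Y \<longrightarrow>
         bij_betw (Dm X Y) {f. comod_hom X Y f} {h. comod_hom (D Y) (D X) h})
   \<and> (\<forall>Z. is_comod Z \<longrightarrow> (\<exists>X. is_comod X \<and> comod_iso Z (D X)))"

text \<open>Words: a word w_{t-1}...w_s is encoded by its start s and the list
  [w_s, w_{s+1}, ..., w_{t-1}] where True means a_j and False means b_j^{-1};
  consecutive letters alternate in type.\<close>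
definition valid_word :: "bool list \<Rightarrow> bool" where
  "valid_word ws \<longleftrightarrow> ws \<noteq> [] \<and> (\<forall>k. Suc k < length ws \<longrightarrow> ws ! Suc k \<noteq> ws ! k)"

text \<open>String comodule St(w): basis v_s..v_t (v_{s+k} is the k-th standard basis vector),
  n = t - s + 1; rho_{g_i} is the projection onto V_i, rho_{a_j} sends v_j to v_{j+1}
  if w_j = a_j, rho_{b_j} sends v_{j+1} to v_j if w_j = b_j^{-1}.\<close>
definition St :: "nat \<Rightarrow> bool list \<Rightarrow> 'k::field comod" where
  "St s ws = (let n = Suc (length ws) in (n, (\<lambda>c. case c of
      G i \<Rightarrow> mat n n (\<lambda>(r,q). if r = q \<and> s + r = i then 1 else 0)
    | A j \<Rightarrow> mat n n (\<lambda>(r,q). if s \<le> j \<and> q = j - s \<and> r = Suc q \<and> q < length ws \<and> ws ! q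
                               then 1 else 0)
    | Bb j \<Rightarrow> mat n n (\<lambda>(r,q). if s \<le> j \<and> r = j - s \<and> q = Suc r \<and> r < length ws \<and> \<not> ws ! r
                               then 1 else 0))))"

definition swap_word :: "bool list \<Rightarrow> bool list" where
  "swap_word ws = map Not ws"

text \<open>The words of M(t,s), M'(t,s) (t - s even) and N(t,s), N'(t,s) (t - s odd),
  listed from w_s up to w_{t-1}.\<close>
definition wM :: "nat \<Rightarrow> nat \<Rightarrow> bool list" where "wM t s = map odd [0..<t-s]"
definition wM' :: "nat \<Rightarrow> nat \<Rightarrow> bool list" where "wM' t s = map even [0..<t-s]"
definition wN :: "nat \<Rightarrow> nat \<Rightarrow> bool list" where "wN t s = map even [0..<t-s]"
definition wN' :: "nat \<Rightarrow> nat \<Rightarrow> bool list" where "wN' t s = map odd [0..<t-s]"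

definition Mc :: "nat \<Rightarrow> nat \<Rightarrow> 'k::field comod" where "Mc t s = St s (wM t s)"
definition Mc' :: "nat \<Rightarrow> nat \<Rightarrow> 'k::field comod" where "Mc' t s = St s (wM' t s)"
definition Nc :: "nat \<Rightarrow> nat \<Rightarrow> 'k::field comod" where "Nc t s = St s (wN t s)"
definition Nc' :: "nat \<Rightarrow> nat \<Rightarrow> 'k::field comod" where "Nc' t s = St s (wN' t s)"

end

theory Submission
  imports Defs
begin

fun sw :: "coel \<Rightarrow> coel" where
  "sw (G i) = G i" | "sw (A i) = Bb i" | "sw (Bb i) = A i"

lemma sw_sw[simp]: "sw (sw c) = c" by (cases c) auto

definition Rf :: "(coel \<Rightarrow> 'a::zero) \<Rightarrow> coel \<Rightarrow> coel \<Rightarrow> 'a" where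
 "Rf x d c = (case d of
    G m \<Rightarrow> (case c of G m' \<Rightarrow> if m = m' then x (G m) else 0
                    | A i \<Rightarrow> if m = Suc i then x (A i) else 0
                    | Bb i \<Rightarrow> if m = i then x (Bb i) else 0)
  | A i \<Rightarrow> (case c of G m \<Rightarrow> if m = i then x (A i) else 0 | _ \<Rightarrow> 0)
  | Bb i \<Rightarrow> (case c of G m \<Rightarrow> if m = Suc i then x (Bb i) else 0 | _ \<Rightarrow> 0))"

lemma Eset: "{e. (d,c) \<in> set (Delta e)} = (case d of
    G m \<Rightarrow> (case c of G m' \<Rightarrow> if m = m' then {G m} else {}
                    | A i \<Rightarrow> if m = Suc i then {A i} else {}
                    | Bb i \<Rightarrow> if m = i then {Bb i} else {})
  | A i \<Rightarrow> (case c of G m \<Rightarrow> if m = i then {A i} else {} | _ \<Rightarrow> {})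
  | Bb i \<Rightarrow> (case c of G m \<Rightarrow> if m = Suc i then {Bb i} else {} | _ \<Rightarrow> {}))"
proof -
  have "(d,c) \<in> set (Delta e) \<longleftrightarrow> e \<in> (case d of
    G m \<Rightarrow> (case c of G m' \<Rightarrow> if m = m' then {G m} else {}
                    | A i \<Rightarrow> if m = Suc i then {A i} else {}
                    | Bb i \<Rightarrow> if m = i then {Bb i} else {})
  | A i \<Rightarrow> (case c of G m \<Rightarrow> if m = i then {A i} else {} | _ \<Rightarrow> {})
  | Bb i \<Rightarrow> (case c of G m \<Rightarrow> if m = Suc i then {Bb i} else {} | _ \<Rightarrow> {}))" for e
    by (cases e; cases d; cases c) auto
  then show ?thesis by blast
qed

lemma sumL: "(\<Sum>e\<in>{e. (d,c) \<in> set (Delta e)}. of_nat (count_list (Delta e) (d,c)) * (x e :: 'k::field)) = Rf x d c"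
  unfolding Eset Rf_def by (cases d; cases c) auto

lemma Rf_sw: "Rf (\<lambda>e. y (sw e)) d c = Rf y (sw c) (sw d)"
  unfolding Rf_def by (cases d; cases c) auto

lemma eps_sw[simp]: "eps (sw e) = eps e" by (cases e) auto
lemma inj_sw: "inj sw" by (metis injI sw_sw)

definition Du :: "'k::field comod \<Rightarrow> 'k comod" where
  "Du X = (fst X, \<lambda>c. transpose_mat (snd X (sw c)))"

lemma Du_Du[simp]: "Du (Du X) = X" unfolding Du_def by auto

lemma comod_mult: assumes "is_comod X" "i < fst X" "j < fst X"
  shows "(snd X d * snd X c) $$ (i,j) = Rf (\<lambda>e. snd X e $$ (i,j)) d c"
proof -
  have "snd X d * snd X c = mat (fst X) (fst X) (\<lambda>(i,j). \<Sum>e\<in>{e. (d,c) \<in> set (Delta e)}.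
                    of_nat (count_list (Delta e) (d,c)) * (snd X e $$ (i,j)))"
    using assms(1) unfolding is_comod_def Let_def by blast
  then show ?thesis using assms by (simp add: sumL)
qed

lemma Du_comod: assumes X: "is_comod X" shows "is_comod (Du X)"
proof -
  obtain n \<rho> where Xe: "X = (n, \<rho>)" by fastforce
  have car: "\<And>c. \<rho> c \<in> carrier_mat n n" and fin: "finite {c. \<rho> c \<noteq> 0\<^sub>m n n}"
    and cu: "1\<^sub>m n = mat n n (\<lambda>(i,j). \<Sum>e\<in>{c. \<rho> c \<noteq> 0\<^sub>m n n}. eps e * (\<rho> e $$ (i,j)))"
    using X unfolding is_comod_def Let_def Xe by auto
  have mu: "(\<rho> d * \<rho> c) $$ (i,j) = Rf (\<lambda>e. \<rho> e $$ (i,j)) d c" if "i < n" "j < n" for i j d c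
    using comod_mult[OF X, of i j d c] that Xe by simp
  have setq: "{c. transpose_mat (\<rho> (sw c)) \<noteq> 0\<^sub>m n n} = sw ` {c. \<rho> c \<noteq> 0\<^sub>m n n}"
  proof -
    have "transpose_mat (\<rho> (sw c)) \<noteq> 0\<^sub>m n n \<longleftrightarrow> \<rho> (sw c) \<noteq> 0\<^sub>m n n" for c
      by (metis transpose_mat_eq zero_transpose_mat)
    then show ?thesis by (auto simp: image_iff) (metis sw_sw)
  qed
  show ?thesis unfolding is_comod_def Let_def Du_def Xe fst_conv snd_conv
  proof (intro conjI allI)
    show "transpose_mat (\<rho> (sw c)) \<in> carrier_mat n n" for c using car by simp
    show "finite {c. transpose_mat (\<rho> (sw c)) \<noteq> 0\<^sub>m n n}" unfolding setq using fin by simp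
    show "transpose_mat (\<rho> (sw d)) * transpose_mat (\<rho> (sw c)) =
         mat n n (\<lambda>(i, j). \<Sum>e | (d, c) \<in> set (Delta e). of_nat (count_list (Delta e) (d, c)) * transpose_mat (\<rho> (sw e)) $$ (i, j))" for d c
    proof (rule eq_matI)
      fix i j assume ij: "i < dim_row (mat n n (\<lambda>(i, j). \<Sum>e | (d, c) \<in> set (Delta e). of_nat (count_list (Delta e) (d, c)) * transpose_mat (\<rho> (sw e)) $$ (i, j)))"
         "j < dim_col (mat n n (\<lambda>(i, j). \<Sum>e | (d, c) \<in> set (Delta e). of_nat (count_list (Delta e) (d, c)) * transpose_mat (\<rho> (sw e)) $$ (i, j)))"
      then have i: "i < n" and j: "j < n" by auto
      have "transpose_mat (\<rho> (sw d)) * transpose_mat (\<rho> (sw c)) = transpose_mat (\<rho> (sw c) * \<rho> (sw d))"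
        using car by (metis transpose_mult)
      then have "(transpose_mat (\<rho> (sw d)) * transpose_mat (\<rho> (sw c))) $$ (i,j) = Rf (\<lambda>e. \<rho> e $$ (j,i)) (sw c) (sw d)"
      proof -
        assume eq: "transpose_mat (\<rho> (sw d)) * transpose_mat (\<rho> (sw c)) = transpose_mat (\<rho> (sw c) * \<rho> (sw d))"
        have d1: "dim_row (\<rho> (sw c) * \<rho> (sw d)) = n" "dim_col (\<rho> (sw c) * \<rho> (sw d)) = n"
          using car[of "sw c"] car[of "sw d"] by auto
        show ?thesis unfolding eq using i j d1 mu[OF j i] by simp
      qed
      also have "\<dots> = Rf (\<lambda>e. \<rho> (sw e) $$ (j,i)) d c" using Rf_sw[of "\<lambda>e. \<rho> e $$ (j,i)" d c] by simp
      also have "\<dots> = Rf (\<lambda>e. transpose_mat (\<rho> (sw e)) $$ (i,j)) d c"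
      proof -
        have "(\<lambda>e. \<rho> (sw e) $$ (j,i)) = (\<lambda>e. transpose_mat (\<rho> (sw e)) $$ (i,j))"
        proof
          fix e show "\<rho> (sw e) $$ (j,i) = transpose_mat (\<rho> (sw e)) $$ (i,j)"
            using car[of "sw e"] i j by (subst index_transpose_mat) auto
        qed
        then show ?thesis by simp
      qed
      also have "\<dots> = mat n n (\<lambda>(i, j). \<Sum>e | (d, c) \<in> set (Delta e). of_nat (count_list (Delta e) (d, c)) * transpose_mat (\<rho> (sw e)) $$ (i, j)) $$ (i,j)"
        using i j by (simp add: sumL)
      finally show "(transpose_mat (\<rho> (sw d)) * transpose_mat (\<rho> (sw c))) $$ (i,j) = \<dots>" .
    qed (use car[of "sw d"] car[of "sw c"] in auto)
    show "1\<^sub>m n = mat n n (\<lambda>(i, j). \<Sum>e\<in>{c. transpose_mat (\<rho> (sw c)) \<noteq> 0\<^sub>m n n}. eps e * transpose_mat (\<rho> (sw e)) $$ (i, j))"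
    proof (rule eq_matI)
      fix i j assume "i < dim_row (mat n n (\<lambda>(i, j). \<Sum>e\<in>{c. transpose_mat (\<rho> (sw c)) \<noteq> 0\<^sub>m n n}. eps e * transpose_mat (\<rho> (sw e)) $$ (i, j)))"
        "j < dim_col (mat n n (\<lambda>(i, j). \<Sum>e\<in>{c. transpose_mat (\<rho> (sw c)) \<noteq> 0\<^sub>m n n}. eps e * transpose_mat (\<rho> (sw e)) $$ (i, j)))"
      then have i: "i < n" and j: "j < n" by auto
      have "(\<Sum>e\<in>{c. transpose_mat (\<rho> (sw c)) \<noteq> 0\<^sub>m n n}. eps e * transpose_mat (\<rho> (sw e)) $$ (i, j))
          = (\<Sum>e\<in>sw ` {c. \<rho> c \<noteq> 0\<^sub>m n n}. eps e * transpose_mat (\<rho> (sw e)) $$ (i, j))" unfolding setq ..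
      also have "\<dots> = (\<Sum>e\<in>{c. \<rho> c \<noteq> 0\<^sub>m n n}. eps (sw e) * transpose_mat (\<rho> (sw (sw e))) $$ (i, j))"
        by (subst sum.reindex) (auto intro: inj_on_subset[OF inj_sw])
      also have "\<dots> = (\<Sum>e\<in>{c. \<rho> c \<noteq> 0\<^sub>m n n}. eps e * \<rho> e $$ (j, i))"
      proof (intro sum.cong refl)
        fix e show "eps (sw e) * transpose_mat (\<rho> (sw (sw e))) $$ (i, j) = eps e * \<rho> e $$ (j, i)"
          using car[of e] i j by (subst index_transpose_mat) auto
      qed
      also have "\<dots> = 1\<^sub>m n $$ (j,i)" using i j by (subst cu) simp
      also have "\<dots> = 1\<^sub>m n $$ (i,j)" using i j by simp
      finally show "1\<^sub>m n $$ (i,j) = mat n n (\<lambda>(i, j). \<Sum>e\<in>{c. transpose_mat (\<rho> (sw c)) \<noteq> 0\<^sub>m n n}. eps e * transpose_mat (\<rho> (sw e)) $$ (i, j)) $$ (i,j)"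
        using i j by simp
    qed auto
  qed
qed

lemma Du_hom: assumes "comod_hom X Y f" shows "comod_hom (Du Y) (Du X) (transpose_mat f)"
proof -
  have X: "is_comod X" and Y: "is_comod Y" and f: "f \<in> carrier_mat (fst Y) (fst X)"
    and c: "\<And>c. f * snd X c = snd Y c * f" using assms unfolding comod_hom_def by auto
  have carX: "\<And>c. snd X c \<in> carrier_mat (fst X) (fst X)" using X unfolding is_comod_def Let_def by auto
  have carY: "\<And>c. snd Y c \<in> carrier_mat (fst Y) (fst Y)" using Y unfolding is_comod_def Let_def by auto
  have "transpose_mat f * transpose_mat (snd Y (sw c)) = transpose_mat (snd X (sw c)) * transpose_mat f" for c
  proof -
    have "transpose_mat f * transpose_mat (snd Y (sw c)) = transpose_mat (snd Y (sw c) * f)"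
      using transpose_mult[OF carY f] by simp
    also have "\<dots> = transpose_mat (f * snd X (sw c))" using c by simp
    also have "\<dots> = transpose_mat (snd X (sw c)) * transpose_mat f"
      using transpose_mult[OF f carX] by simp
    finally show ?thesis .
  qed
  then show ?thesis unfolding comod_hom_def using Du_comod[OF X] Du_comod[OF Y] f
    by (simp add: Du_def)
qed

lemma hom_car: "comod_hom X Y f \<Longrightarrow> f \<in> carrier_mat (fst Y) (fst X)" unfolding comod_hom_def by auto

lemma comod_iso_refl: "is_comod X \<Longrightarrow> comod_iso X X"
proof -
  assume X: "is_comod X"
  have carX: "\<And>c. snd X c \<in> carrier_mat (fst X) (fst X)" using X unfolding is_comod_def Let_def by auto
  have "comod_hom X X (1\<^sub>m (fst X))" unfolding comod_hom_def using X
    by (auto simp: left_mult_one_mat[OF carX] right_mult_one_mat[OF carX])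
  then show ?thesis unfolding comod_iso_def by (intro exI[of _ "1\<^sub>m (fst X)"]) simp
qed

lemma Du_duality: "is_duality (Du :: 'k::field comod \<Rightarrow> _) (\<lambda>X Y f. transpose_mat f)"
  unfolding is_duality_def
proof (intro conjI allI impI)
  show "is_comod X \<Longrightarrow> is_comod (Du X)" for X by (rule Du_comod)
  show "comod_hom X Y f \<Longrightarrow> comod_hom (Du Y) (Du X) (transpose_mat f)" for X Y f by (rule Du_hom)
  show "transpose_mat (g * f) = transpose_mat f * transpose_mat g" if "comod_hom X Y f" "comod_hom Y Z g" for X Y Z f g
    using transpose_mult[OF hom_car[OF that(2)] hom_car[OF that(1)]] .
  show "transpose_mat (1\<^sub>m (fst X)) = 1\<^sub>m (fst (Du X))" for X by (simp add: Du_def)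
  show "transpose_mat (f + g) = transpose_mat f + transpose_mat g" if "comod_hom X Y f" "comod_hom X Y g" for X Y f g
    using transpose_add[OF hom_car[OF that(1)] hom_car[OF that(2)]] .
  show "transpose_mat (a \<cdot>\<^sub>m f) = a \<cdot>\<^sub>m transpose_mat f" for f a
    by (rule eq_matI) auto
  show "bij_betw transpose_mat {f. comod_hom X Y f} {h. comod_hom (Du Y) (Du X) h}" for X Y
  proof (rule bij_betwI[where g = transpose_mat])
    show "transpose_mat \<in> {f. comod_hom X Y f} \<rightarrow> {h. comod_hom (Du Y) (Du X) h}" using Du_hom[of X Y] by auto
    show "transpose_mat \<in> {h. comod_hom (Du Y) (Du X) h} \<rightarrow> {f. comod_hom X Y f}"
      using Du_hom[of "Du Y" "Du X"] by auto
  qed auto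
  show "\<exists>X. is_comod X \<and> comod_iso Z (Du X)" if "is_comod Z" for Z
    using that Du_comod[OF that] comod_iso_refl[OF that] by (intro exI[of _ "Du Z"]) simp
qed

definition stE :: "nat \<Rightarrow> bool list \<Rightarrow> coel \<Rightarrow> nat \<Rightarrow> nat \<Rightarrow> 'k::field" where
  "stE s ws c r q = (case c of
      G i \<Rightarrow> if r = q \<and> s + r = i then 1 else 0
    | A j \<Rightarrow> if s \<le> j \<and> q = j - s \<and> r = Suc q \<and> q < length ws \<and> ws ! q then 1 else 0
    | Bb j \<Rightarrow> if s \<le> j \<and> r = j - s \<and> q = Suc r \<and> r < length ws \<and> \<not> ws ! r then 1 else 0)"

lemma St_eq: "St s ws = (Suc (length ws), \<lambda>c. mat (Suc (length ws)) (Suc (length ws)) (\<lambda>(r,q). stE s ws c r q))"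
  unfolding St_def stE_def Let_def by (intro prod_eqI ext) (auto split: coel.splits)

lemma Du_St: "Du (St s ws) = St s (swap_word ws)"
  unfolding St_eq Du_def swap_word_def
  by (intro prod_eqI ext eq_matI) (auto simp: stE_def split: coel.splits)

fun key :: "nat \<Rightarrow> coel \<Rightarrow> nat \<Rightarrow> nat" where
  "key s (G m) i = i" | "key s (A j) i = j - s" | "key s (Bb j) i = Suc i"

lemma stE_key: "stE s ws d i k = (if k = key s d i then stE s ws d i (key s d i) else 0)"
  by (cases d) (auto simp: stE_def)

lemma St_mult: assumes v: "valid_word ws" and i: "i < Suc (length ws)" and j: "j < Suc (length ws)"
  shows "(\<Sum>k<Suc (length ws). stE s ws d i k * stE s ws c k j) = Rf (\<lambda>e. (stE s ws e i j :: 'k::field)) d c"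
proof -
  have vw: "\<And>k. Suc k < length ws \<Longrightarrow> ws ! Suc k \<noteq> ws ! k" using v unfolding valid_word_def by auto
  have "(\<Sum>k<Suc (length ws). stE s ws d i k * stE s ws c k j) =
        (\<Sum>k<Suc (length ws). if k = key s d i then (stE s ws d i (key s d i) * stE s ws c (key s d i) j :: 'k) else 0)"
    by (intro sum.cong refl) (subst stE_key, auto)
  also have "\<dots> = (if key s d i < Suc (length ws) then stE s ws d i (key s d i) * stE s ws c (key s d i) j else 0)"
    by simp
  also have "\<dots> = Rf (\<lambda>e. stE s ws e i j) d c"
    using i j vw by (cases d; cases c) (auto simp: Rf_def stE_def)
  finally show ?thesis .
qed

fun idx :: "coel \<Rightarrow> nat" where
  "idx (G m) = m" | "idx (A j) = j" | "idx (Bb j) = j"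

lemma St_comod: assumes v: "valid_word ws" shows "is_comod (St s ws :: 'k::field comod)"
proof -
  define n where "n = Suc (length ws)"
  define \<rho> where "\<rho> = (\<lambda>c. mat n n (\<lambda>(r,q). stE s ws c r q) :: 'k mat)"
  have Se: "St s ws = (n, \<rho>)" unfolding St_eq n_def \<rho>_def ..
  have car: "\<And>c. \<rho> c \<in> carrier_mat n n" unfolding \<rho>_def by auto
  have sub: "{c. \<rho> c \<noteq> 0\<^sub>m n n} \<subseteq> G ` {..s+n} \<union> A ` {..s+n} \<union> Bb ` {..s+n}"
  proof
    fix c assume "c \<in> {c. \<rho> c \<noteq> 0\<^sub>m n n}"
    then have nz: "\<rho> c \<noteq> 0\<^sub>m n n" by simp
    have "idx c \<le> s + n"
    proof (rule ccontr)
      assume "\<not> idx c \<le> s + n"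
      then have "\<rho> c = 0\<^sub>m n n" unfolding \<rho>_def
        by (intro eq_matI) (cases c; auto simp: stE_def n_def)+
      with nz show False by simp
    qed
    then show "c \<in> G ` {..s+n} \<union> A ` {..s+n} \<union> Bb ` {..s+n}" by (cases c) auto
  qed
  have fin: "finite {c. \<rho> c \<noteq> 0\<^sub>m n n}" by (rule finite_subset[OF sub]) auto
  show ?thesis unfolding is_comod_def Let_def Se fst_conv snd_conv
  proof (intro conjI allI)
    show "\<rho> c \<in> carrier_mat n n" for c by (rule car)
    show "finite {c. \<rho> c \<noteq> 0\<^sub>m n n}" by (rule fin)
    show "\<rho> d * \<rho> c = mat n n (\<lambda>(i, j). \<Sum>e | (d, c) \<in> set (Delta e). of_nat (count_list (Delta e) (d, c)) * \<rho> e $$ (i, j))" for d c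
    proof (rule eq_matI)
      fix i j assume "i < dim_row (mat n n (\<lambda>(i, j). \<Sum>e | (d, c) \<in> set (Delta e). of_nat (count_list (Delta e) (d, c)) * \<rho> e $$ (i, j)))"
        "j < dim_col (mat n n (\<lambda>(i, j). \<Sum>e | (d, c) \<in> set (Delta e). of_nat (count_list (Delta e) (d, c)) * \<rho> e $$ (i, j)))"
      then have i: "i < n" and j: "j < n" by auto
      have "(\<rho> d * \<rho> c) $$ (i,j) = (\<Sum>k<n. stE s ws d i k * stE s ws c k j)"
        using i j unfolding \<rho>_def by (simp add: scalar_prod_def lessThan_atLeast0)
      also have "\<dots> = Rf (\<lambda>e. stE s ws e i j) d c" using St_mult[OF v] i j unfolding n_def by blast
      also have "\<dots> = Rf (\<lambda>e. \<rho> e $$ (i,j)) d c" using i j unfolding \<rho>_def by simp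
      also have "\<dots> = mat n n (\<lambda>(i, j). \<Sum>e | (d, c) \<in> set (Delta e). of_nat (count_list (Delta e) (d, c)) * \<rho> e $$ (i, j)) $$ (i,j)"
        using i j by (simp add: sumL)
      finally show "(\<rho> d * \<rho> c) $$ (i,j) = \<dots>" .
    qed (auto simp: \<rho>_def)
    show "1\<^sub>m n = mat n n (\<lambda>(i, j). \<Sum>e\<in>{c. \<rho> c \<noteq> 0\<^sub>m n n}. eps e * \<rho> e $$ (i, j))"
    proof (rule eq_matI)
      fix i j assume "i < dim_row (mat n n (\<lambda>(i, j). \<Sum>e\<in>{c. \<rho> c \<noteq> 0\<^sub>m n n}. eps e * \<rho> e $$ (i, j)))"
        "j < dim_col (mat n n (\<lambda>(i, j). \<Sum>e\<in>{c. \<rho> c \<noteq> 0\<^sub>m n n}. eps e * \<rho> e $$ (i, j)))"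
      then have i: "i < n" and j: "j < n" by auto
      have mem: "G (s+i) \<in> {c. \<rho> c \<noteq> 0\<^sub>m n n}"
      proof
        have "\<rho> (G (s+i)) $$ (i,i) = 1" using i unfolding \<rho>_def by (simp add: stE_def)
        then show "\<rho> (G (s+i)) \<noteq> 0\<^sub>m n n" using i by auto
      qed
      have "(\<Sum>e\<in>{c. \<rho> c \<noteq> 0\<^sub>m n n}. eps e * \<rho> e $$ (i, j)) =
            (\<Sum>e\<in>{c. \<rho> c \<noteq> 0\<^sub>m n n}. if e = G (s+i) then (if i = j then 1 else 0) else 0)"
      proof (intro sum.cong refl)
        fix e show "eps e * \<rho> e $$ (i, j) = (if e = G (s+i) then (if i = j then 1 else 0) else 0)"
          using i j by (cases e) (auto simp: \<rho>_def stE_def)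
      qed
      also have "\<dots> = (if i = j then 1 else 0)" using fin mem by simp
      finally show "1\<^sub>m n $$ (i,j) = mat n n (\<lambda>(i, j). \<Sum>e\<in>{c. \<rho> c \<noteq> 0\<^sub>m n n}. eps e * \<rho> e $$ (i, j)) $$ (i,j)"
        using i j by simp
    qed auto
  qed
qed

lemma valid_odd: "0 < m \<Longrightarrow> valid_word (map odd [0..<m])"
  unfolding valid_word_def by auto
lemma valid_even: "0 < m \<Longrightarrow> valid_word (map even [0..<m])"
  unfolding valid_word_def by auto

lemma iso_Du_St: "valid_word ws \<Longrightarrow> comod_iso (Du (St s ws)) (St s (swap_word ws) :: 'k::field comod)"
proof -
  assume v: "valid_word ws"
  have "valid_word (swap_word ws)" using v unfolding valid_word_def swap_word_def by auto
  then show ?thesis unfolding Du_St by (intro comod_iso_refl St_comod)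
qed

theorem proposition2p3p4:
  "\<exists>(D :: 'k::field comod \<Rightarrow> 'k comod) Dm. is_duality D Dm
     \<and> (\<forall>s ws. valid_word ws \<longrightarrow> comod_iso (D (St s ws)) (St s (swap_word ws)))
     \<and> (\<forall>s t. s < t \<and> even (t - s) \<longrightarrow>
           comod_iso (D (Mc t s)) (Mc' t s) \<and> comod_iso (D (Mc' t s)) (Mc t s))
     \<and> (\<forall>s t. s < t \<and> odd (t - s) \<longrightarrow>
           comod_iso (D (Nc t s)) (Nc' t s) \<and> comod_iso (D (Nc' t s)) (Nc t s))"
proof (intro exI conjI allI impI)
  show "is_duality (Du :: 'k::field comod \<Rightarrow> 'k comod) (\<lambda>X Y f. transpose_mat f)" by (rule Du_duality)
  show "comod_iso (Du (St s ws)) (St s (swap_word ws) :: 'k comod)" if "valid_word ws" for s ws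
    using iso_Du_St[OF that] .
  fix s t :: nat
  assume st: "s < t \<and> even (t - s)"
  then have p: "0 < t - s" by simp
  show "comod_iso (Du (Mc t s)) (Mc' t s :: 'k comod)"
    using iso_Du_St[OF valid_odd[OF p], of s] unfolding Mc_def Mc'_def wM_def wM'_def swap_word_def
    by (simp add: comp_def)
  show "comod_iso (Du (Mc' t s)) (Mc t s :: 'k comod)"
    using iso_Du_St[OF valid_even[OF p], of s] unfolding Mc_def Mc'_def wM_def wM'_def swap_word_def
    by (simp add: comp_def)
next
  fix s t :: nat
  assume st: "s < t \<and> odd (t - s)"
  then have p: "0 < t - s" by simp
  show "comod_iso (Du (Nc t s)) (Nc' t s :: 'k comod)"
    using iso_Du_St[OF valid_even[OF p], of s] unfolding Nc_def Nc'_def wN_def wN'_def swap_word_def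
    by (simp add: comp_def)
  show "comod_iso (Du (Nc' t s)) (Nc t s :: 'k comod)"
    using iso_Du_St[OF valid_odd[OF p], of s] unfolding Nc_def Nc'_def wN_def wN'_def swap_word_def
    by (simp add: comp_def)
qed

end
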